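(* Let $(K,\mathrm{val})$ be a $2$-henselian valued field whose residue class field $F$ has characteristic $\neq2$, let $A$ be a subring with $B\subseteq A\subseteq K$, let $g\in G$, and let $M$ be a proper quasi-quadratic module in $F$ (i.e. $M\ne F$). Then $\Phi^A(M,[\![g]\!])$ is a quasi-quadratic module in $A$.
   Context: Let $(G,\le)$ be a totally ordered abelian group written multiplicatively with identity $e$; $G_{\ge e}=\{g\in G:g\ge e\}$, $G^2=\{g^2:g\in G\}$. Let $(K,\mathrm{val})$ be a valued field with surjective valuation $\mathrm{val}:K\to G\cup\{\infty\}$, valuation ring $B=\{x:\mathrm{val}(x)\ge e\}$, residue map $\pi:B\to F$, residue field $F$. A strict unit is $x\in B^\times$ with $\pi(x)=1$; when $\mathrm{char}F\ne2$, $2$-henselian is equivalent to every strict unit being a square in $K$. For a subring $A$ with $B\subseteq A\subseteq K$ put $H=\mathrm{val}(A^\times)$; $H$ is a convex subgroup of $G$ and $\mathrm{val}(A\setminus\{0\})=H\cup G_{\ge e}$. For $g\in G$: $\overline g$ is its class in $G/G^2$, $[\![g]\!]$ its class in $G/H^2$, $[g]$ its class in $G/H$; "$\mathrm{val}(x)=\overline g$" means $\overline{\mathrm{val}(x)}=\overline g$, and similarly for $[\![\cdot]\!]$ and $[\cdot]$. A quasi-quadratic module in a commutative ring $R$ is a subset $M\subseteq R$ with $M+M\subseteq M$ and $a^2M\subseteq M$ for all $a\in R$. A pseudo-angular component map is a map $\mathrm{p.an}:K^\times\to F^\times$ such that: (1) $\mathrm{p.an}(u)=\pi(u)$ for $u\in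 B^\times$; (2) $\mathrm{p.an}(ux)=\pi(u)\mathrm{p.an}(x)$ for $u\in B^\times,x\in K^\times$; (3) for all $g\in G$, $c\in F^\times$ there is $w\in K$ with $\mathrm{val}(w)=g$, $\mathrm{p.an}(w)=c$; (4) for nonzero $x_1,x_2$ with $x_1+x_2\ne0$: if $\mathrm{val}(x_1)<\mathrm{val}(x_2)$ then $\mathrm{p.an}(x_1+x_2)=\mathrm{p.an}(x_1)$; if $\mathrm{val}(x_1)=\mathrm{val}(x_2)$ and $\mathrm{p.an}(x_1)+\mathrm{p.an}(x_2)\ne0$ then $\mathrm{val}(x_1+x_2)=\mathrm{val}(x_1)$ and $\mathrm{p.an}(x_1+x_2)=\mathrm{p.an}(x_1)+\mathrm{p.an}(x_2)$; (5) if $x,y\in K^\times$, $\overline{\mathrm{val}(x)}=\overline{\mathrm{val}(y)}$ and $\mathrm{p.an}(x)=\mathrm{p.an}(y)$ then $y=u^2x$ for some $u\in K^\times$; (6) for $a,u\in K^\times$ there is $k\in F^\times$ with $\mathrm{p.an}(au^2)=\mathrm{p.an}(a)k^2$. Such a map exists under the hypotheses; fix one. For $g\in G$ and a quasi-quadratic module $M$ in $F$: $$\Phi^A(M,[\![g]\!])=\{x\in A\setminus\{0\}:\ \mathrm{val}(x)=\overline g,\ (\mathrm{val}(x)=[\![g]\!]\ \text{or}\ \mathrm{val}(x)>g),\ \mathrm{p.an}(x)\in M\}\cup\{0\}$$ (this depends only on $[\![g]\!]$). *)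

theory Defs
  imports Main
begin

text \<open>The value group G is written additively: identity 0, G_{>=e} = {g. g >= 0},
  G^2 = {g + g}. The value of 0 (infinity) is never used: all statements about
  val are restricted to nonzero elements.\<close>

definition valuation :: "('k::field \<Rightarrow> 'g::linordered_ab_group_add) \<Rightarrow> bool" where
  "valuation val \<longleftrightarrow>
     (\<forall>x y. x \<noteq> 0 \<longrightarrow> y \<noteq> 0 \<longrightarrow> val (x * y) = val x + val y) \<and>
     (\<forall>x y. x \<noteq> 0 \<longrightarrow> y \<noteq> 0 \<longrightarrow> x + y \<noteq> 0 \<longrightarrow> min (val x) (val y) \<le> val (x + y)) \<and>
     (\<forall>g. \<exists>x. x \<noteq> 0 \<and> val x = g)"

definition val_ring :: "('k::field \<Rightarrow> 'g::linordered_ab_group_add) \<Rightarrow> 'k set" where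
  "val_ring val = {x. x = 0 \<or> val x \<ge> 0}"

definition val_units :: "('k::field \<Rightarrow> 'g::linordered_ab_group_add) \<Rightarrow> 'k set" where
  "val_units val = {x. x \<noteq> 0 \<and> val x = 0}"

definition residue_map ::
  "('k::field \<Rightarrow> 'g::linordered_ab_group_add) \<Rightarrow> ('k \<Rightarrow> 'f::field) \<Rightarrow> bool" where
  "residue_map val \<pi> \<longleftrightarrow>
     (\<forall>x\<in>val_ring val. \<forall>y\<in>val_ring val. \<pi> (x + y) = \<pi> x + \<pi> y \<and> \<pi> (x * y) = \<pi> x * \<pi> y) \<and>
     \<pi> 1 = 1 \<and>
     (\<forall>c. \<exists>x\<in>val_ring val. \<pi> x = c) \<and>
     (\<forall>x\<in>val_ring val. \<pi> x = 0 \<longleftrightarrow> (x = 0 \<or> val x > 0))"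

definition strict_unit :: "('k::field \<Rightarrow> 'g::linordered_ab_group_add) \<Rightarrow> ('k \<Rightarrow> 'f::field) \<Rightarrow> 'k \<Rightarrow> bool" where
  "strict_unit val \<pi> x \<longleftrightarrow> x \<in> val_units val \<and> \<pi> x = 1"

text \<open>2-henselian (in residue characteristic not 2): every strict unit is a square.\<close>
definition two_henselian :: "('k::field \<Rightarrow> 'g::linordered_ab_group_add) \<Rightarrow> ('k \<Rightarrow> 'f::field) \<Rightarrow> bool" where
  "two_henselian val \<pi> \<longleftrightarrow> (\<forall>x. strict_unit val \<pi> x \<longrightarrow> (\<exists>y. x = y ^ 2))"

definition subring :: "'k::comm_ring_1 set \<Rightarrow> bool" where
  "subring A \<longleftrightarrow> 1 \<in> A \<and> (\<forall>x\<in>A. \<forall>y\<in>A. x + y \<in> A \<and> x * y \<in> A \<and> - x \<in> A)"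

definition ring_units :: "'k::field set \<Rightarrow> 'k set" where
  "ring_units A = {x\<in>A. x \<noteq> 0 \<and> inverse x \<in> A}"

definition squares_grp :: "'g::ab_group_add set \<Rightarrow> 'g set" where
  "squares_grp S = {h + h | h. h \<in> S}"

definition pseudo_angular ::
  "('k::field \<Rightarrow> 'g::linordered_ab_group_add) \<Rightarrow> ('k \<Rightarrow> 'f::field) \<Rightarrow> ('k \<Rightarrow> 'f) \<Rightarrow> bool" where
  "pseudo_angular val \<pi> pan \<longleftrightarrow>
     (\<forall>x. x \<noteq> 0 \<longrightarrow> pan x \<noteq> 0) \<and>
     (\<forall>u\<in>val_units val. pan u = \<pi> u) \<and>
     (\<forall>u\<in>val_units val. \<forall>x. x \<noteq> 0 \<longrightarrow> pan (u * x) = \<pi> u * pan x) \<and>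
     (\<forall>g c. c \<noteq> 0 \<longrightarrow> (\<exists>w. w \<noteq> 0 \<and> val w = g \<and> pan w = c)) \<and>
     (\<forall>x1 x2. x1 \<noteq> 0 \<longrightarrow> x2 \<noteq> 0 \<longrightarrow> x1 + x2 \<noteq> 0 \<longrightarrow>
        (val x1 < val x2 \<longrightarrow> pan (x1 + x2) = pan x1) \<and>
        (val x1 = val x2 \<longrightarrow> pan x1 + pan x2 \<noteq> 0 \<longrightarrow>
           val (x1 + x2) = val x1 \<and> pan (x1 + x2) = pan x1 + pan x2)) \<and>
     (\<forall>x y. x \<noteq> 0 \<longrightarrow> y \<noteq> 0 \<longrightarrow> val x - val y \<in> squares_grp UNIV \<longrightarrow> pan x = pan y \<longrightarrow>
        (\<exists>u. u \<noteq> 0 \<and> y = u ^ 2 * x)) \<and>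
     (\<forall>a u. a \<noteq> 0 \<longrightarrow> u \<noteq> 0 \<longrightarrow> (\<exists>k. k \<noteq> 0 \<and> pan (a * u ^ 2) = pan a * k ^ 2))"

definition quasi_quadratic_module :: "'a::comm_ring_1 set \<Rightarrow> 'a set \<Rightarrow> bool" where
  "quasi_quadratic_module R M \<longleftrightarrow> M \<subseteq> R \<and>
     (\<forall>x\<in>M. \<forall>y\<in>M. x + y \<in> M) \<and> (\<forall>a\<in>R. \<forall>x\<in>M. a ^ 2 * x \<in> M)"

definition Phi ::
  "('k::field \<Rightarrow> 'g::linordered_ab_group_add) \<Rightarrow> ('k \<Rightarrow> 'f::field) \<Rightarrow> 'k set \<Rightarrow> 'f set \<Rightarrow> 'g \<Rightarrow> 'k set" where
  "Phi val pan A M g =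
     {x\<in>A. x \<noteq> 0 \<and> val x - g \<in> squares_grp UNIV \<and>
        (val x - g \<in> squares_grp (val ` ring_units A) \<or> val x > g) \<and> pan x \<in> M} \<union> {0}"

end

theory Submission
  imports Defs
begin

lemma dbl_zero: "(a::'g::linordered_ab_group_add) + a = 0 \<Longrightarrow> a = 0"
  by (metis add_less_zeroD add_pos_pos less_irrefl linorder_neqE_linordered_idom neg_less_eq_nonneg
      add_nonpos_neg double_add_le_zero_iff_single_add_le_zero le_less)

lemma dbl_pos: "(0::'g::linordered_ab_group_add) < a + a \<Longrightarrow> 0 < a"
  by (metis add_nonpos_nonpos not_le)

lemma val_one: assumes "valuation val" shows "val (1::'k::field) = (0::'g::linordered_ab_group_add)"
proof -
  have m: "\<forall>x y. (x::'k) \<noteq> 0 \<longrightarrow> y \<noteq> 0 \<longrightarrow> val (x*y) = val x + val y" using assms unfolding valuation_def by blast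
  have "val (1 * (1::'k)) = val 1 + val 1" using m[rule_format, of 1 1] by simp
  then show ?thesis by (simp add: dbl_zero)
qed

lemma val_neg1: assumes "valuation val" shows "val (-1::'k::field) = (0::'g::linordered_ab_group_add)"
proof -
  have m: "\<forall>x y. (x::'k) \<noteq> 0 \<longrightarrow> y \<noteq> 0 \<longrightarrow> val (x*y) = val x + val y" using assms unfolding valuation_def by blast
  have "val ((-1) * (-1::'k)) = val (-1) + val (-1)" using m[rule_format, of "-1" "-1"] by simp
  then show ?thesis using val_one[OF assms] by (simp add: dbl_zero)
qed

lemma val_neg: assumes "valuation val" "x \<noteq> 0"
  shows "val (- (x::'k::field)) = (val x :: 'g::linordered_ab_group_add)"
proof -
  have m: "\<forall>x y. (x::'k) \<noteq> 0 \<longrightarrow> y \<noteq> 0 \<longrightarrow> val (x*y) = val x + val y" using assms unfolding valuation_def by blast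
  have "val ((-1) * x) = val (-1) + val x" using m[rule_format, of "-1" x] assms by simp
  then show ?thesis using val_neg1[OF assms(1)] by simp
qed

lemma val_inv: assumes "valuation val" "x \<noteq> 0"
  shows "val (inverse (x::'k::field)) = - (val x :: 'g::linordered_ab_group_add)"
proof -
  have m: "\<forall>x y. (x::'k) \<noteq> 0 \<longrightarrow> y \<noteq> 0 \<longrightarrow> val (x*y) = val x + val y" using assms unfolding valuation_def by blast
  have "val (x * inverse x) = val x + val (inverse x)" using m[rule_format, of x "inverse x"] assms by simp
  then have "val x + val (inverse x) = 0" using val_one[OF assms(1)] assms(2) by simp
  then show ?thesis by (simp add: eq_neg_iff_add_eq_0 add.commute)
qed

lemma in_units: assumes "valuation val" "val_ring val \<subseteq> A" "z \<in> A" "z \<noteq> 0" "val z \<le> 0"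
  shows "z \<in> ring_units A"
proof -
  have "val (inverse z) \<ge> 0" using val_inv[OF assms(1,4)] assms(5) by simp
  then have "inverse z \<in> A" using assms(2) unfolding val_ring_def by auto
  then show ?thesis using assms unfolding ring_units_def by auto
qed

lemma M_prop: assumes "quasi_quadratic_module (UNIV :: 'f::field set) M" "M \<noteq> UNIV" "(2::'f) \<noteq> 0"
  "c \<in> M" "- c \<in> M" shows "c = 0"
proof (rule ccontr)
  assume c0: "c \<noteq> 0"
  have "z \<in> M" for z
  proof -
    define y where "y = z / c"
    define s where "s = (1 + y) / 2"
    define t where "t = (1 - y) / 2"
    have q: "\<forall>a. \<forall>x\<in>M. a ^ 2 * x \<in> M" using assms(1) unfolding quasi_quadratic_module_def by simp
    have "s^2 * c \<in> M" "t^2 * (-c) \<in> M" using q[rule_format, OF assms(4), of s] q[rule_format, OF assms(5), of t] by (simp_all only: mult_minus_right)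
    then have mem: "s^2 * c + t^2 * (-c) \<in> M" using assms unfolding quasi_quadratic_module_def by auto
    have st1: "s + t = 1" unfolding s_def t_def using assms(3) by (simp add: add_divide_distrib[symmetric])
    have st2: "s - t = y" unfolding s_def t_def using assms(3) by (simp add: diff_divide_distrib[symmetric])
    have "s^2 - t^2 = y" using st1 st2 by (metis mult_1 power2_eq_square square_diff_square_factored)
    moreover have "s^2 * c + t^2 * (-c) = c * (s^2 - t^2)" by (simp add: algebra_simps)
    ultimately have "s^2 * c + t^2 * (-c) = z" unfolding y_def using c0 by simp
    then show ?thesis using mem by simp
  qed
  then show False using assms(2) by auto
qed

theorem mainTheorem4:
  fixes val :: "'k::field \<Rightarrow> 'g::linordered_ab_group_add"
    and \<pi> :: "'k \<Rightarrow> 'f::field"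
    and pan :: "'k \<Rightarrow> 'f"
    and A :: "'k set" and M :: "'f set" and g :: 'g
  assumes "valuation val"
    and "residue_map val \<pi>"
    and "(2::'f) \<noteq> 0"
    and "two_henselian val \<pi>"
    and "pseudo_angular val \<pi> pan"
    and "subring A" and "val_ring val \<subseteq> A"
    and "quasi_quadratic_module (UNIV :: 'f set) M" and "M \<noteq> UNIV"
  shows "quasi_quadratic_module A (Phi val pan A M g)"
proof -
  note V = assms(1)[unfolded valuation_def]
  note P = assms(5)[unfolded pseudo_angular_def]
  note S = assms(6)[unfolded subring_def]
  note MM = assms(8)[unfolded quasi_quadratic_module_def]
  let ?H = "val ` ring_units A"
  have P1: "\<And>x. x \<noteq> 0 \<Longrightarrow> pan x \<noteq> 0" using P by simp
  have P4: "\<And>x1 x2. x1 \<noteq> 0 \<Longrightarrow> x2 \<noteq> 0 \<Longrightarrow> x1 + x2 \<noteq> 0 \<Longrightarrow>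
        (val x1 < val x2 \<longrightarrow> pan (x1 + x2) = pan x1) \<and>
        (val x1 = val x2 \<longrightarrow> pan x1 + pan x2 \<noteq> 0 \<longrightarrow>
           val (x1 + x2) = val x1 \<and> pan (x1 + x2) = pan x1 + pan x2)"
    using P[THEN conjunct2, THEN conjunct2, THEN conjunct2, THEN conjunct2, THEN conjunct1] by blast
  have P6: "\<And>a u. a \<noteq> 0 \<Longrightarrow> u \<noteq> 0 \<Longrightarrow> (\<exists>k. k \<noteq> 0 \<and> pan (a * u ^ 2) = pan a * k ^ 2)"
    using P[THEN conjunct2, THEN conjunct2, THEN conjunct2, THEN conjunct2, THEN conjunct2, THEN conjunct2] by blast
  have V2: "\<And>x y. x \<noteq> 0 \<Longrightarrow> y \<noteq> 0 \<Longrightarrow> x + y \<noteq> 0 \<Longrightarrow> min (val x) (val y) \<le> val (x + y)"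
    using V[THEN conjunct2, THEN conjunct1] by blast
  have S1: "\<And>x y. x \<in> A \<Longrightarrow> y \<in> A \<Longrightarrow> x + y \<in> A" and S2: "\<And>x y. x \<in> A \<Longrightarrow> y \<in> A \<Longrightarrow> x * y \<in> A"
    using S by blast+
  have zA: "0 \<in> A" using S by (metis add.right_inverse)
  have mulv: "val (x*y) = val x + val y" if "x \<noteq> 0" "y \<noteq> 0" for x y using V that by blast
  have inH: "d \<in> ?H" if "a \<in> A" "a \<noteq> 0" "val a \<le> d" "d \<le> 0" for a d
  proof -
    obtain w where w: "w \<noteq> 0" "val w = d - val a" using V by metis
    have "w \<in> A" using w that assms(7) unfolding val_ring_def by auto
    then have "a * w \<in> A" using S2 that by blast
    moreover have "val (a*w) = d" using mulv[OF that(2) w(1)] w by simp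
    moreover have "a * w \<noteq> 0" using that w by simp
    ultimately have "a * w \<in> ring_units A" using in_units[OF assms(1,7)] that by auto
    then show ?thesis using \<open>val (a*w) = d\<close> by force
  qed
  have sub: "Phi val pan A M g \<subseteq> A" unfolding Phi_def using zA by auto
  have add: "x + y \<in> Phi val pan A M g" if x: "x \<in> Phi val pan A M g" and y: "y \<in> Phi val pan A M g" for x y
  proof (cases "x = 0 \<or> y = 0 \<or> x + y = 0")
    case True then show ?thesis using x y unfolding Phi_def by auto
  next
    case False
    then have nz: "x \<noteq> 0" "y \<noteq> 0" "x + y \<noteq> 0" by auto
    have xP: "x \<in> A" "val x - g \<in> squares_grp UNIV"
      "val x - g \<in> squares_grp ?H \<or> val x > g" "pan x \<in> M" using x nz unfolding Phi_def by auto
    have yP: "y \<in> A" "val y - g \<in> squares_grp UNIV"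
      "val y - g \<in> squares_grp ?H \<or> val y > g" "pan y \<in> M" using y nz unfolding Phi_def by auto
    have sA: "x + y \<in> A" using S1 xP yP by blast
    have lt: "val (x+y) = val x \<and> pan (x+y) = pan x" if "val x < val y" "x \<noteq> 0" "y \<noteq> 0" "x + y \<noteq> 0" for x y
    proof -
      have "pan (x+y) = pan x" using P4[OF that(2-4)] that(1) by blast
      moreover have "min (val x) (val y) \<le> val (x+y)" using V2 that by blast
      moreover have "min (val (x+y)) (val (-y)) \<le> val (x + y + -y)" using V2[of "x+y" "-y"] that by simp
      moreover have "val (-y) = val y" using val_neg[OF assms(1)] that by blast
      ultimately show ?thesis using that by (auto simp: min_def split: if_splits)
    qed
    consider "val x < val y" | "val y < val x" | "val x = val y" by fastforce
    then show ?thesis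
    proof cases
      case 1 then show ?thesis using lt[OF 1 nz] xP sA nz unfolding Phi_def by auto
    next
      case 2 then have "val (y+x) = val y \<and> pan (y+x) = pan y" using lt[OF 2 nz(2,1)] nz by (metis add.commute)
      then show ?thesis using yP sA nz unfolding Phi_def by (auto simp: add.commute)
    next
      case 3
      have "pan x + pan y \<noteq> 0"
      proof
        assume "pan x + pan y = 0"
        then have "pan y = - pan x" by (simp add: eq_neg_iff_add_eq_0 add.commute)
        then have "pan x = 0" using M_prop[OF assms(8,9,3)] xP yP by auto
        then show False using P1 nz by blast
      qed
      then have "val (x+y) = val x \<and> pan (x+y) = pan x + pan y" using P4[OF nz] 3 by blast
      moreover have "pan x + pan y \<in> M" using MM xP yP by blast
      ultimately show ?thesis using xP sA nz unfolding Phi_def by auto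
    qed
  qed
  have mul: "a^2 * x \<in> Phi val pan A M g" if a: "a \<in> A" and x: "x \<in> Phi val pan A M g" for a x
  proof (cases "a = 0 \<or> x = 0")
    case True then show ?thesis using x unfolding Phi_def by auto
  next
    case False
    then have nz: "a \<noteq> 0" "x \<noteq> 0" by auto
    have xP: "x \<in> A" "val x - g \<in> squares_grp UNIV"
      "val x - g \<in> squares_grp ?H \<or> val x > g" "pan x \<in> M" using x nz unfolding Phi_def by auto
    have mA: "a^2 * x \<in> A" using S2 a xP by (simp add: power2_eq_square)
    have vm: "val (a^2*x) = val a + val a + val x" using mulv nz by (simp add: power2_eq_square)
    obtain k' where k': "k' \<noteq> 0" "pan (x * a^2) = pan x * k'^2" using P6[OF nz(2,1)] by blast
    have pm: "pan (a^2 * x) \<in> M" using k' MM xP by (simp add: mult.commute)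
    obtain k where k: "val x - g = k + k" "k \<in> ?H \<or> k > 0"
    proof (cases "val x - g \<in> squares_grp ?H")
      case True then show ?thesis using that unfolding squares_grp_def by blast
    next
      case False then have "val x > g" using xP by blast
      moreover obtain k where "val x - g = k + k" using xP unfolding squares_grp_def by blast
      ultimately show ?thesis using that dbl_pos by (metis diff_gt_0_iff_gt)
    qed
    define b where "b = val a"
    have e: "val (a^2*x) - g = (k+b) + (k+b)" using vm k(1) unfolding b_def by (simp add: algebra_simps)
    have "k + b \<in> ?H \<or> k + b > 0"
    proof (cases "k + b > 0")
      case False
      then have le: "k + b \<le> 0" by simp
      show ?thesis
      proof (cases "k \<in> ?H")
        case True
        then obtain u where u: "u \<in> ring_units A" "val u = k" by blast
        have "u \<in> A" "u \<noteq> 0" using u unfolding ring_units_def by auto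
        then have "u * a \<in> A" "u * a \<noteq> 0" "val (u*a) = k + b" using S2 a nz mulv u unfolding b_def by auto
        then show ?thesis using inH[of "u*a" "k+b"] le by auto
      next
        case False
        then have "k > 0" using k by blast
        then show ?thesis using inH[of a "k+b"] a nz le unfolding b_def by auto
      qed
    qed simp
    moreover have "k + b > 0 \<Longrightarrow> val (a^2*x) > g" using e by (metis add_pos_pos diff_gt_0_iff_gt)
    ultimately show ?thesis using e mA pm nz unfolding Phi_def squares_grp_def by auto
  qed
  show ?thesis unfolding quasi_quadratic_module_def using sub add mul by blast
qed

end
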